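(* Let $G$ be a finite simple graph with $n$ vertices and minimum degree $\delta$ satisfying $1{,}000 \le \delta \le 24{,}000$. Then $$\gamma_s(G) \le \frac{\sqrt{\ln(\delta+1)\,(11.8 - 0.48\ln\delta)} + 0.25}{\sqrt{\delta+1}}\, n.$$
   Context: For a vertex $v$ of $G$, $N[v]$ denotes the closed neighbourhood of $v$ (i.e. $v$ together with its neighbours). A signed domination function of $G$ is a function $f: V(G) \to \{-1, 1\}$ such that $\sum_{x \in N[v]} f(x) \ge 1$ for every vertex $v \in V(G)$. The weight of $f$ is $f(V(G)) = \sum_{v \in V(G)} f(v)$. The signed domination number $\gamma_s(G)$ is the minimum weight of a signed domination function of $G$. *)

theory Defs
  imports Complex_Main
begin

definition simple_graph :: "'a set \<Rightarrow> ('a \<Rightarrow> 'a \<Rightarrow> bool) \<Rightarrow> bool" where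
  "simple_graph V E \<longleftrightarrow> finite V \<and> (\<forall>u v. E u v \<longrightarrow> u \<in> V \<and> v \<in> V)
     \<and> (\<forall>u v. E u v \<longrightarrow> E v u) \<and> (\<forall>v. \<not> E v v)"

definition neighbours :: "'a set \<Rightarrow> ('a \<Rightarrow> 'a \<Rightarrow> bool) \<Rightarrow> 'a \<Rightarrow> 'a set" where
  "neighbours V E v = {u \<in> V. E v u}"

definition closed_nbhd :: "'a set \<Rightarrow> ('a \<Rightarrow> 'a \<Rightarrow> bool) \<Rightarrow> 'a \<Rightarrow> 'a set" where
  "closed_nbhd V E v = insert v (neighbours V E v)"

definition degree :: "'a set \<Rightarrow> ('a \<Rightarrow> 'a \<Rightarrow> bool) \<Rightarrow> 'a \<Rightarrow> nat" where
  "degree V E v = card (neighbours V E v)"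

definition min_degree :: "'a set \<Rightarrow> ('a \<Rightarrow> 'a \<Rightarrow> bool) \<Rightarrow> nat" where
  "min_degree V E = Min (degree V E ` V)"

definition signed_dom_fun :: "'a set \<Rightarrow> ('a \<Rightarrow> 'a \<Rightarrow> bool) \<Rightarrow> ('a \<Rightarrow> int) \<Rightarrow> bool" where
  "signed_dom_fun V E f \<longleftrightarrow> (\<forall>v\<in>V. f v \<in> {-1, 1})
     \<and> (\<forall>v\<in>V. (\<Sum>x\<in>closed_nbhd V E v. f x) \<ge> 1)"

definition signed_dom_number :: "'a set \<Rightarrow> ('a \<Rightarrow> 'a \<Rightarrow> bool) \<Rightarrow> int" where
  "signed_dom_number V E = Min {(\<Sum>v\<in>V. f v) | f. signed_dom_fun V E f}"

end

theory Submission
  imports Defs "HOL-Probability.Probability"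
begin


lemma bin_tail0:
  assumes A: "finite A" "card A = m" "m > 0" and e: "0 \<le> e" "e \<le> 1"
  shows "measure_pmf.prob (Pi_pmf A False (\<lambda>_. bernoulli_pmf ((1+e)/2)))
           {f. 2 * card {x\<in>A. f x} \<le> m} \<le> exp (-(e^2 * m / 2))"
proof -
  let ?q = "(1+e)/2"
  have q: "?q \<in> {0..1}" using e by auto
  interpret binomial_distribution m ?q by unfold_locales (rule q)
  have "measure_pmf.prob (Pi_pmf A False (\<lambda>_. bernoulli_pmf ?q)) {f. 2 * card {x\<in>A. f x} \<le> m}
     = measure_pmf.prob (map_pmf (\<lambda>f. card {x\<in>A. f x}) (Pi_pmf A False (\<lambda>_. bernoulli_pmf ?q))) {k. 2*k \<le> m}"
    by (simp add: measure_map_pmf vimage_def)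
  also have "map_pmf (\<lambda>f. card {x\<in>A. f x}) (Pi_pmf A False (\<lambda>_. bernoulli_pmf ?q)) = binomial_pmf m ?q"
    using binomial_pmf_altdef'[OF A(1,2) q, of False] by simp
  also have "{k. 2*k \<le> m} = {x. real x \<le> real m * ?q - real m * e / 2}"
    by (auto simp: field_simps)
  also have "measure_pmf.prob (binomial_pmf m ?q) \<dots> \<le> exp (-2 * (real m * e / 2)\<^sup>2 / real m)"
    by (rule prob_le) (use A e in auto)
  also have "-2 * (real m * e / 2)\<^sup>2 / real m = -(e^2 * m / 2)"
    using A by (simp add: power2_eq_square field_simps)
  finally show ?thesis .
qed

lemma bin_tail:
  assumes V: "finite V" and AV: "A \<subseteq> V" and A: "card A = m" "m > 0" and e: "0 \<le> e" "e \<le> 1"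
  shows "measure_pmf.prob (Pi_pmf V False (\<lambda>_. bernoulli_pmf ((1+e)/2)))
           {f. 2 * card {x\<in>A. f x} \<le> m} \<le> exp (-(e^2 * m / 2))"
proof -
  let ?O = "Pi_pmf V False (\<lambda>_. bernoulli_pmf ((1+e)/2))"
  have fA: "finite A" using V AV finite_subset by blast
  have "Pi_pmf A False (\<lambda>_. bernoulli_pmf ((1+e)/2)) = map_pmf (\<lambda>f x. if x \<in> A then f x else False) ?O"
    by (rule Pi_pmf_subset[OF V AV])
  hence "measure_pmf.prob (Pi_pmf A False (\<lambda>_. bernoulli_pmf ((1+e)/2))) {f. 2 * card {x\<in>A. f x} \<le> m}
     = measure_pmf.prob ?O {f. 2 * card {x\<in>A. f x} \<le> m}"
    by (simp add: measure_map_pmf vimage_def cong: conj_cong)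
  thus ?thesis using bin_tail0[OF fA A e] by simp
qed

lemma exists_le_expectation:
  fixes g :: "'b \<Rightarrow> real"
  assumes "finite (set_pmf M)"
  shows "\<exists>x\<in>set_pmf M. g x \<le> measure_pmf.expectation M g"
proof -
  let ?S = "set_pmf M"
  have ne: "?S \<noteq> {}" by (rule set_pmf_not_empty)
  define c where "c = Min (g ` ?S)"
  obtain x where x: "x \<in> ?S" "g x = c" unfolding c_def using assms ne
    by (metis (mono_tags, lifting) Min_in finite_imageI image_iff image_is_empty)
  have "c \<le> measure_pmf.expectation M g"
    by (rule measure_pmf.integral_ge_const) (auto simp: integrable_measure_pmf_finite[OF assms] c_def AE_measure_pmf_iff assms)
  thus ?thesis using x by auto
qed

lemma exists_set:
  fixes e :: real
  assumes V: "finite V" and NV: "\<And>v. v \<in> V \<Longrightarrow> N v \<subseteq> V"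
    and Npos: "\<And>v. v \<in> V \<Longrightarrow> card (N v) > 0" and e: "0 \<le> e" "e \<le> 1"
  shows "\<exists>P\<subseteq>V. real (card P) + (\<Sum>v\<in>{v\<in>V. 2 * card (N v \<inter> P) \<le> card (N v)}. real (card (N v)))
     \<le> (1+e)/2 * card V + (\<Sum>v\<in>V. card (N v) * exp (-(e^2 * card (N v) / 2)))"
proof -
  define q where "q = (1+e)/2"
  define \<Omega> where "\<Omega> = Pi_pmf V False (\<lambda>_. bernoulli_pmf q)"
  define cost where "cost = (\<lambda>f. (\<Sum>u\<in>V. indicator {f. f u} f) +
     (\<Sum>v\<in>V. real (card (N v)) * indicator {f. 2 * card {x\<in>N v. f x} \<le> card (N v)} f) :: real)"
  have fin: "finite (set_pmf \<Omega>)"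
    unfolding \<Omega>_def by (rule finite_subset[OF set_Pi_pmf_subset'[OF V]]) (auto intro: finite_PiE_dflt V)
  have int: "integrable (measure_pmf \<Omega>) g" for g :: "_ \<Rightarrow> real"
    by (rule integrable_measure_pmf_finite[OF fin])
  have pu: "measure_pmf.prob \<Omega> {f. f u} = q" if "u \<in> V" for u
  proof -
    have "measure_pmf.prob \<Omega> {f. f u} = measure_pmf.prob (map_pmf (\<lambda>f. f u) \<Omega>) {True}"
      by (simp add: measure_map_pmf vimage_def)
    also have "map_pmf (\<lambda>f. f u) \<Omega> = bernoulli_pmf q"
      unfolding \<Omega>_def using Pi_pmf_component[OF V, of u False "\<lambda>_. bernoulli_pmf q"] that by simp
    also have "measure_pmf.prob (bernoulli_pmf q) {True} = q"
      using e by (simp add: q_def measure_pmf_single)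
    finally show ?thesis .
  qed
  have pb: "measure_pmf.prob \<Omega> {f. 2 * card {x\<in>N v. f x} \<le> card (N v)} \<le> exp (-(e^2 * card (N v) / 2))"
    if "v \<in> V" for v
    unfolding \<Omega>_def q_def by (rule bin_tail[OF V NV[OF that] refl Npos[OF that] e])
  have "measure_pmf.expectation \<Omega> cost = (\<Sum>u\<in>V. measure_pmf.prob \<Omega> {f. f u}) +
      (\<Sum>v\<in>V. real (card (N v)) * measure_pmf.prob \<Omega> {f. 2 * card {x\<in>N v. f x} \<le> card (N v)})"
    unfolding cost_def by (simp add: int Bochner_Integration.integral_add Bochner_Integration.integral_sum)
  also have "\<dots> \<le> (\<Sum>u\<in>V. q) + (\<Sum>v\<in>V. card (N v) * exp (-(e^2 * card (N v) / 2)))"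
    by (intro add_mono sum_mono mult_left_mono) (auto simp: pu pb)
  also have "(\<Sum>u\<in>V. q) = q * card V" by simp
  finally have E: "measure_pmf.expectation \<Omega> cost \<le> q * card V + (\<Sum>v\<in>V. card (N v) * exp (-(e^2 * card (N v) / 2)))" .
  obtain f where f: "cost f \<le> measure_pmf.expectation \<Omega> cost"
    using exists_le_expectation[OF fin, of cost] by blast
  define P where "P = {u\<in>V. f u}"
  have c1: "(\<Sum>u\<in>V. indicator {f. f u} f :: real) = real (card P)"
    unfolding P_def by (simp add: indicator_def sum.If_cases V Int_def conj_commute)
  have c2: "(\<Sum>v\<in>V. real (card (N v)) * indicator {f. 2 * card {x\<in>N v. f x} \<le> card (N v)} f)
     = (\<Sum>v\<in>{v\<in>V. 2 * card (N v \<inter> P) \<le> card (N v)}. real (card (N v)))"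
  proof -
    have "\<And>v. v \<in> V \<Longrightarrow> {x\<in>N v. f x} = N v \<inter> P" using NV unfolding P_def by auto
    hence "(\<Sum>v\<in>V. real (card (N v)) * indicator {f. 2 * card {x\<in>N v. f x} \<le> card (N v)} f)
       = (\<Sum>v\<in>V. if 2 * card (N v \<inter> P) \<le> card (N v) then real (card (N v)) else 0)"
      by (intro sum.cong) (auto simp: indicator_def)
    also have "\<dots> = (\<Sum>v\<in>{v\<in>V. 2 * card (N v \<inter> P) \<le> card (N v)}. real (card (N v)))"
      by (simp add: sum.If_cases V Int_def)
    finally show ?thesis .
  qed
  show ?thesis
    by (rule exI[of _ P]) (use f E c1 c2 in \<open>auto simp: cost_def P_def q_def\<close>)
qed


lemma sum_pm:
  assumes "finite S"
  shows "(\<Sum>x\<in>S. if x \<in> Q then 1 else -1 :: int) = 2 * int (card (S \<inter> Q)) - int (card S)"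
proof -
  have "(\<Sum>x\<in>S. if x \<in> Q then 1 else -1 :: int) = int (card (S \<inter> Q)) - int (card (S - Q))"
    using assms by (simp add: sum.If_cases Int_def Diff_eq)
  moreover have "card S = card (S \<inter> Q) + card (S - Q)"
    using assms by (metis card_Int_Diff)
  ultimately show ?thesis by simp
qed

lemma xexp_mono:
  fixes a b :: real
  assumes "1 \<le> a" "a \<le> b"
  shows "b * exp (-b) \<le> a * exp (-a)"
proof -
  have "(b - a) * 1 \<le> (b - a) * a" using assms by (intro mult_left_mono) auto
  hence "b / a \<le> 1 + (b - a)" using assms by (simp add: field_simps)
  also have "\<dots> \<le> exp (b - a)" by (rule exp_ge_add_one_self)
  finally have "b \<le> a * exp (b - a)" using assms by (simp add: field_simps)
  hence "b * exp (-b) \<le> a * exp (b - a) * exp (-b)" by (simp add: mult_right_mono)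
  also have "\<dots> = a * exp (-a)" by (simp add: mult.assoc exp_add[symmetric])
  finally show ?thesis .
qed

theorem corollary2:
  fixes V :: "'a set" and E :: "'a \<Rightarrow> 'a \<Rightarrow> bool"
  assumes "simple_graph V E" and "V \<noteq> {}"
    and "1000 \<le> min_degree V E" and "min_degree V E \<le> 24000"
  shows "real_of_int (signed_dom_number V E)
    \<le> (sqrt (ln (real (min_degree V E) + 1) * (11.8 - 0.48 * ln (real (min_degree V E))))
         + 0.25) / sqrt (real (min_degree V E) + 1) * real (card V)"
proof -
  note G = assms(1)[unfolded simple_graph_def]
  have V: "finite V" using G by blast
  define \<delta> where "\<delta> = min_degree V E"
  define d where "d = real \<delta>"
  define n where "n = card V"
  define L where "L = ln (d + 1)"
  define N where "N = closed_nbhd V E"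
  have d1: "1000 \<le> d" "d \<le> 24000" using assms(3,4) unfolding d_def \<delta>_def by auto
  have degge: "\<delta> \<le> Defs.degree V E v" if "v \<in> V" for v
    unfolding \<delta>_def min_degree_def using V that by (intro Min_le) auto
  have NV: "N v \<subseteq> V" if "v \<in> V" for v
    using that unfolding N_def closed_nbhd_def neighbours_def by auto
  have cardN: "card (N v) = Defs.degree V E v + 1" if "v \<in> V" for v
  proof -
    have "v \<notin> neighbours V E v" using G unfolding neighbours_def by auto
    moreover have "finite (neighbours V E v)" using V unfolding neighbours_def by auto
    ultimately show ?thesis unfolding N_def closed_nbhd_def Defs.degree_def by simp
  qed
  have finN: "finite (N v)" if "v \<in> V" for v using NV[OF that] V finite_subset by blast
  have Lpos: "1 \<le> 2 * L" 
  proof -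
    have "exp 1 \<le> (3::real)" using exp_le by linarith
    hence "exp 1 \<le> d + 1" using d1 by linarith
    hence "1 \<le> L" unfolding L_def using d1 by (subst ln_ge_iff) auto
    thus ?thesis by simp
  qed
  define s where "s = sqrt (d + 1)"
  have s8: "8 \<le> s" unfolding s_def using d1 by (simp add: real_le_rsqrt)
  have ss: "s * s = d + 1" unfolding s_def using d1 by simp
  have L8: "L \<le> 2 * s"
  proof -
    have "ln s \<le> s - 1" using s8 by (intro ln_le_minus_one) simp
    moreover have "L = 2 * ln s" unfolding L_def s_def using d1 by (simp add: ln_sqrt)
    ultimately show ?thesis by simp
  qed
  define e where "e = sqrt (4 * L / (d + 1))"
  have e2: "e^2 = 4 * L / (d + 1)" unfolding e_def using Lpos d1 by simp
  have e0: "0 \<le> e" unfolding e_def using Lpos d1 by simp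
  have e1: "e \<le> 1"
  proof -
    have "8 * s \<le> s * s" using s8 by (intro mult_right_mono) auto
    hence "4 * L \<le> d + 1" using L8 ss by linarith
    hence "4 * L / (d + 1) \<le> 1" using d1 by simp
    thus ?thesis unfolding e_def by simp
  qed
  have es: "e = 2 * sqrt L / s"
    unfolding e_def s_def using Lpos d1 by (simp add: real_sqrt_divide real_sqrt_mult)
  obtain P where P: "P \<subseteq> V" and Pc: "real (card P) + (\<Sum>v\<in>{v\<in>V. 2 * card (N v \<inter> P) \<le> card (N v)}. real (card (N v)))
     \<le> (1+e)/2 * card V + (\<Sum>v\<in>V. card (N v) * exp (-(e^2 * card (N v) / 2)))"
    using exists_set[where N=N, OF V NV _ e0 e1] cardN by auto
  have pv: "card (N v) * exp (-(e^2 * card (N v) / 2)) \<le> 1 / (d + 1)" if "v \<in> V" for v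
  proof -
    define m where "m = real (card (N v))"
    have m: "d + 1 \<le> m" unfolding m_def d_def using cardN[OF that] degge[OF that] by simp
    have "m * exp (-(e^2 * m / 2)) = (d + 1) / (2 * L) * ((2 * L * m / (d + 1)) * exp (-(2 * L * m / (d + 1))))"
    proof -
      have ex: "e^2 * m / 2 = 2 * L * m / (d + 1)" unfolding e2 using d1 by (simp add: field_simps)
      have "L \<noteq> 0" "d + 1 \<noteq> 0" using d1 Lpos by auto
      hence "(d + 1) / (2 * L) * (2 * L * m / (d + 1)) = m" by (simp add: divide_simps)
      thus ?thesis unfolding ex by (metis mult.assoc)
    qed
    also have "\<dots> \<le> (d + 1) / (2 * L) * ((2 * L) * exp (-(2 * L)))"
    proof -
      have "(2 * L) * (d + 1) \<le> (2 * L) * m" using Lpos m by (intro mult_left_mono) auto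
      hence h3: "2 * L \<le> 2 * L * m / (d + 1)" using d1 by (simp add: le_divide_eq)
      have "(2 * L * m / (d + 1)) * exp (-(2 * L * m / (d + 1))) \<le> (2 * L) * exp (-(2 * L))"
        by (rule xexp_mono[OF Lpos h3])
      moreover have "0 \<le> (d + 1) / (2 * L)" using Lpos d1 by simp
      ultimately show ?thesis by (rule mult_left_mono)
    qed
    also have "\<dots> = (d + 1) * exp (-(2 * L))" using Lpos by simp
    also have "exp (-(2 * L)) = 1 / ((d + 1) * (d + 1))"
    proof -
      have "exp (-(2 * L)) = inverse (exp L * exp L)"
        by (simp only: exp_minus mult_2 exp_add)
      also have "exp L = d + 1" unfolding L_def using d1 by simp
      finally show ?thesis by (simp add: divide_inverse)
    qed
    also have "(d + 1) * (1 / ((d + 1) * (d + 1))) = 1 / (d + 1)" using d1 by simp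
    finally show ?thesis unfolding m_def .
  qed
  define B where "B = {v\<in>V. 2 * card (N v \<inter> P) \<le> card (N v)}"
  define P' where "P' = P \<union> (\<Union>v\<in>B. N v)"
  have P'V: "P' \<subseteq> V" unfolding P'_def B_def using P NV by auto
  have cP': "card P' \<le> card P + (\<Sum>v\<in>B. card (N v))"
  proof -
    have "card P' \<le> card P + card (\<Union>v\<in>B. N v)" unfolding P'_def by (rule card_Un_le)
    also have "card (\<Union>v\<in>B. N v) \<le> (\<Sum>v\<in>B. card (N v))"
      by (rule card_UN_le) (simp add: B_def V)
    finally show ?thesis by simp
  qed
  define h where "h = (\<lambda>x. if x \<in> P' then 1 else -1 :: int)"
  have sdf: "signed_dom_fun V E h"
    unfolding signed_dom_fun_def
  proof (intro conjI ballI)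
    fix v assume v: "v \<in> V"
    show "h v \<in> {-1, 1}" unfolding h_def by auto
    have eq: "(\<Sum>x\<in>closed_nbhd V E v. h x) = 2 * int (card (N v \<inter> P')) - int (card (N v))"
      unfolding h_def N_def[symmetric] by (rule sum_pm[OF finN[OF v]])
    show "1 \<le> (\<Sum>x\<in>closed_nbhd V E v. h x)"
    proof (cases "v \<in> B")
      case True
      hence "N v \<inter> P' = N v" unfolding P'_def by auto
      moreover have "card (N v) \<ge> 1" using cardN[OF v] by simp
      ultimately show ?thesis using eq by simp
    next
      case False
      hence "2 * card (N v \<inter> P) > card (N v)" using v unfolding B_def by auto
      moreover have "card (N v \<inter> P) \<le> card (N v \<inter> P')"
        by (rule card_mono) (auto simp: finN[OF v] P'_def)
      ultimately show ?thesis using eq by linarith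
    qed
  qed
  have "V \<inter> P' = P'" using P'V by blast
  have sumh: "(\<Sum>x\<in>V. h x) = 2 * int (card P') - int n"
    unfolding h_def n_def using sum_pm[OF V, of P'] \<open>V \<inter> P' = P'\<close> by simp
  have finS: "finite {(\<Sum>v\<in>V. f v) | f. signed_dom_fun V E f}"
  proof (rule finite_subset)
    show "{(\<Sum>v\<in>V. f v) | f. signed_dom_fun V E f} \<subseteq> {- int n..int n}"
    proof clarify
      fix f assume f: "signed_dom_fun V E f"
      have "\<bar>\<Sum>v\<in>V. f v\<bar> \<le> (\<Sum>v\<in>V. \<bar>f v\<bar>)" by (rule sum_abs)
      also have "\<dots> = (\<Sum>v\<in>V. 1)" using f unfolding signed_dom_fun_def by (intro sum.cong) auto
      finally show "(\<Sum>v\<in>V. f v) \<in> {- int n..int n}" unfolding n_def by auto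
    qed
  qed simp
  have gam: "signed_dom_number V E \<le> 2 * int (card P') - int n"
    unfolding signed_dom_number_def using finS sdf sumh by (intro Min_le) (auto intro!: exI[of _ h])
  have "(\<Sum>v\<in>V. card (N v) * exp (-(e^2 * card (N v) / 2))) \<le> (\<Sum>v\<in>V. 1 / (d + 1))"
    by (rule sum_mono) (rule pv)
  also have "(\<Sum>v\<in>V. 1 / (d + 1)) = n / (d + 1)" unfolding n_def by simp
  finally have "real (card P) + (\<Sum>v\<in>B. real (card (N v))) \<le> (1+e)/2 * n + n / (d + 1)"
    using Pc unfolding B_def n_def by linarith
  moreover have "real (card P') \<le> real (card P) + (\<Sum>v\<in>B. real (card (N v)))"
    using cP' by (metis of_nat_add of_nat_le_iff of_nat_sum)
  ultimately have cP'': "real (card P') \<le> (1+e)/2 * n + n / (d + 1)" by linarith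
  have "real_of_int (signed_dom_number V E) \<le> 2 * real (card P') - n" using gam
    by (metis (mono_tags, opaque_lifting) of_int_diff of_int_le_iff of_int_mult of_int_numeral of_int_of_nat_eq)
  also have "\<dots> \<le> 2 * ((1+e)/2 * n + n / (d + 1)) - n" using cP'' by (smt (verit))
  also have "\<dots> = (e + 2 / (d + 1)) * n" by (simp add: algebra_simps)
  finally have gam2: "real_of_int (signed_dom_number V E) \<le> (e + 2 / (d + 1)) * n" .
  define K where "K = 11.8 - 0.48 * ln d"
  have lnd: "ln d \<le> 15"
  proof -
    have "ln d \<le> ln ((2::real) ^ 15)" using d1 by (intro ln_mono) auto
    also have "\<dots> = 15 * ln 2" using ln_realpow[of "2::real" 15] by simp
    also have "\<dots> \<le> 15" using ln_2_less_1 by simp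
    finally show ?thesis .
  qed
  have K4: "4 \<le> K" unfolding K_def using lnd by simp
  have sq: "2 * sqrt L \<le> sqrt (L * K)"
  proof -
    have "sqrt (L * 4) \<le> sqrt (L * K)" using K4 Lpos by (intro real_sqrt_le_mono mult_left_mono) auto
    thus ?thesis by (simp add: real_sqrt_mult)
  qed
  have coef: "e + 2 / (d + 1) \<le> (sqrt (L * K) + 0.25) / s"
  proof -
    have "s \<noteq> 0" using s8 by auto
    have "e + 2 / (d + 1) = 2 * sqrt L / s + 2 / (s * s)" using es ss by simp
    also have "\<dots> = (2 * sqrt L + 2 / s) / s" using \<open>s \<noteq> 0\<close> by (simp add: divide_simps)
    finally have "e + 2 / (d + 1) = (2 * sqrt L + 2 / s) / s" .
    also have "\<dots> \<le> (sqrt (L * K) + 0.25) / s"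
    proof (rule divide_right_mono)
      have "2 / s \<le> 1 / 4" using s8 by (simp add: divide_simps)
      thus "2 * sqrt L + 2 / s \<le> sqrt (L * K) + 0.25" using sq by (simp add: power2_eq_square)
    qed (use s8 in simp)
    finally show ?thesis .
  qed
  have "(e + 2 / (d + 1)) * n \<le> (sqrt (L * K) + 0.25) / s * n"
    by (rule mult_right_mono[OF coef]) simp
  with gam2 show ?thesis
    unfolding d_def[symmetric] \<delta>_def[symmetric] L_def[symmetric] K_def[symmetric] s_def[symmetric] n_def[symmetric]
    by linarith
qed

end
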